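(* Consider the voting game described in the context with complete information (all voters' types are common knowledge). Under liquid democracy there exists a best equilibrium (in terms of information aggregation) $\sigma$, and the probability that the election outcome matches the state under $\sigma$ is at least as large as under the best equilibrium of direct democracy and at least as large as under the best equilibrium of representative democracy.
   Context: Voters $\mathcal N=\{1,\dots,N\}$ choose between alternatives $A$ and $B$; the alternative receiving a simple majority of the votes cast wins, ties broken uniformly at random. There is an unknown state $\omega\in\{a,b\}$ with common prior $\Pr(\omega=a)=\pi\in(0,1)$. Each voter $i$ has a type $t_i=(p_i,q_i)$ with preference $p_i\in\{A,B,I\}$ and precision $q_i\in[1/2,1]$. An independent voter ($p_i=I$) gets payoff $1$ if the outcome is $A$ and $\omega=a$ or the outcome is $B$ and $\omega=b$, and $0$ otherwise; a partisan with $p_i=A$ (resp. $p_i=B$) gets payoff $1$ iff the outcome is $A$ (resp. $B$), else $0$. Each voter $i$ observes a private signal $s_i\in\{a,b\}$ with $\Pr(s_i=\omega\mid\omega)=q_i$, signals independent conditional on $\omega$. A (pure interim) strategy of voter $i$ maps her signal to an action. Direct democracy (DD): actions are $a$ (vote for $A$), $b$ (vote for $B$), $x$ (abstain). Liquid democracy (LD): additionally $d_j$ (delegate to voter $j\neq i$); delegation is transitive (votes held by a delegator pass on to whomever she delegates to), all votes held by voters in a delegation cycle are abstained, and a voter who does not delegate casts all votes she holds (her own plus those delegated to her) for the alternative she chooses or abstains all of them. Representative democracy (RD): there is a fixed set of representatives $\mathcal J$ consisting of some subset of $\mathcal N$ together with two non-strategic representatives $a^*,b^*\notin\mathcal N$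 who always vote for $A$ and $B$ respectively; a representative in $\mathcal N$ chooses among $a,b,x$, and a non-representative chooses between abstaining and delegating to some representative in $\mathcal J$. An equilibrium is a Bayes Nash equilibrium in which no voter uses a weakly dominated strategy. An equilibrium is a best equilibrium (in terms of information aggregation) if it maximizes, among equilibria of the mechanism, the probability that the outcome matches the state (outcome $A$ when $\omega=a$, outcome $B$ when $\omega=b$). *)

theory Defs
  imports Complex_Main
begin

text \<open>Voters are the elements of a finite type 'v. States and signals are booleans:
  True stands for a (resp. signal a), False for b.\<close>

datatype pref = PrefA | PrefB | PrefI

text \<open>Actions: vote for A (Vote True) / B (Vote False), abstain, delegate to a voter,
  or (only in representative democracy) delegate to the non-strategic representative
  a* (DelegStar True) or b* (DelegStar False).\<close>
datatype 'v act = Vote bool | Abstain | Deleg 'v | DelegStar bool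

definition DD_actions :: "'v \<Rightarrow> 'v act set" where
  "DD_actions i = {Vote True, Vote False, Abstain}"

definition LD_actions :: "'v \<Rightarrow> 'v act set" where
  "LD_actions i = {Vote True, Vote False, Abstain} \<union> {Deleg j | j. j \<noteq> i}"

definition RD_actions :: "'v set \<Rightarrow> 'v \<Rightarrow> 'v act set" where
  "RD_actions J i = (if i \<in> J then {Vote True, Vote False, Abstain}
                     else {Abstain, DelegStar True, DelegStar False} \<union> Deleg ` J)"

text \<open>After CARD('v) steps one is
  either at a voter who does not delegate (the end of the chain), or still at a
  delegating voter, which happens exactly when the chain runs into a cycle.\<close>
definition next_voter :: "('v \<Rightarrow> 'v act) \<Rightarrow> 'v \<Rightarrow> 'v" where
  "next_voter a i = (case a i of Deleg j \<Rightarrow> j | _ \<Rightarrow> i)"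

definition chain_end :: "('v::finite \<Rightarrow> 'v act) \<Rightarrow> 'v \<Rightarrow> 'v" where
  "chain_end a i = (next_voter a ^^ card (UNIV :: 'v set)) i"

text \<open>Where the vote owned by voter i ends up: Some True = counted for A,
  Some False = counted for B, None = abstained (including cycles).\<close>
definition ballot :: "('v::finite \<Rightarrow> 'v act) \<Rightarrow> 'v \<Rightarrow> bool option" where
  "ballot a i = (case a (chain_end a i) of
       Vote x \<Rightarrow> Some x | DelegStar x \<Rightarrow> Some x | Abstain \<Rightarrow> None | Deleg _ \<Rightarrow> None)"

definition votes_for :: "('v::finite \<Rightarrow> 'v act) \<Rightarrow> bool \<Rightarrow> nat" where
  "votes_for a x = card {i. ballot a i = Some x}"

definition probA :: "('v::finite \<Rightarrow> 'v act) \<Rightarrow> real" where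
  "probA a = (if votes_for a True > votes_for a False then 1
              else if votes_for a True = votes_for a False then 1/2 else 0)"

definition joint_prob :: "real \<Rightarrow> ('v::finite \<Rightarrow> real) \<Rightarrow> bool \<Rightarrow> ('v \<Rightarrow> bool) \<Rightarrow> real" where
  "joint_prob \<pi> q w s = (if w then \<pi> else 1 - \<pi>) *
      (\<Prod>i\<in>UNIV. if s i = w then q i else 1 - q i)"

definition payoff :: "pref \<Rightarrow> bool \<Rightarrow> real \<Rightarrow> real" where
  "payoff pr w pA = (case pr of PrefA \<Rightarrow> pA | PrefB \<Rightarrow> 1 - pA
                     | PrefI \<Rightarrow> (if w then pA else 1 - pA))"

text \<open>Strategy profiles: sigma i maps voter i's signal to an action.\<close>
type_synonym 'v profile = "'v \<Rightarrow> bool \<Rightarrow> 'v act"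

definition valid_profile :: "('v \<Rightarrow> 'v act set) \<Rightarrow> 'v profile \<Rightarrow> bool" where
  "valid_profile M \<sigma> \<longleftrightarrow> (\<forall>i x. \<sigma> i x \<in> M i)"

definition valid_strategy :: "('v \<Rightarrow> 'v act set) \<Rightarrow> 'v \<Rightarrow> (bool \<Rightarrow> 'v act) \<Rightarrow> bool" where
  "valid_strategy M i \<tau> \<longleftrightarrow> (\<forall>x. \<tau> x \<in> M i)"

definition exp_util :: "real \<Rightarrow> ('v::finite \<Rightarrow> pref) \<Rightarrow> ('v \<Rightarrow> real) \<Rightarrow> 'v \<Rightarrow> 'v profile \<Rightarrow> real" where
  "exp_util \<pi> p q i \<sigma> = (\<Sum>w\<in>UNIV. \<Sum>s\<in>UNIV.
      joint_prob \<pi> q w s * payoff (p i) w (probA (\<lambda>j. \<sigma> j (s j))))"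

definition interim_util :: "real \<Rightarrow> ('v::finite \<Rightarrow> pref) \<Rightarrow> ('v \<Rightarrow> real) \<Rightarrow> 'v \<Rightarrow> bool \<Rightarrow> 'v profile \<Rightarrow> real" where
  "interim_util \<pi> p q i x \<sigma> =
     (\<Sum>w\<in>UNIV. \<Sum>s\<in>{s. s i = x}. joint_prob \<pi> q w s * payoff (p i) w (probA (\<lambda>j. \<sigma> j (s j))))
     / (\<Sum>w\<in>UNIV. \<Sum>s\<in>{s. s i = x}. joint_prob \<pi> q w s)"

definition bayes_nash :: "real \<Rightarrow> ('v::finite \<Rightarrow> pref) \<Rightarrow> ('v \<Rightarrow> real) \<Rightarrow> ('v \<Rightarrow> 'v act set) \<Rightarrow> 'v profile \<Rightarrow> bool" where
  "bayes_nash \<pi> p q M \<sigma> \<longleftrightarrow> valid_profile M \<sigma> \<and>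
     (\<forall>i x c. c \<in> M i \<longrightarrow>
        interim_util \<pi> p q i x (\<sigma>(i := (\<sigma> i)(x := c))) \<le> interim_util \<pi> p q i x \<sigma>)"

definition weakly_dominated :: "real \<Rightarrow> ('v::finite \<Rightarrow> pref) \<Rightarrow> ('v \<Rightarrow> real) \<Rightarrow> ('v \<Rightarrow> 'v act set) \<Rightarrow> 'v \<Rightarrow> (bool \<Rightarrow> 'v act) \<Rightarrow> bool" where
  "weakly_dominated \<pi> p q M i \<tau> \<longleftrightarrow> (\<exists>\<tau>'. valid_strategy M i \<tau>' \<and>
      (\<forall>\<sigma>. valid_profile M \<sigma> \<longrightarrow> exp_util \<pi> p q i (\<sigma>(i := \<tau>)) \<le> exp_util \<pi> p q i (\<sigma>(i := \<tau>'))) \<and>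
      (\<exists>\<sigma>. valid_profile M \<sigma> \<and> exp_util \<pi> p q i (\<sigma>(i := \<tau>)) < exp_util \<pi> p q i (\<sigma>(i := \<tau>'))))"

definition equilibrium :: "real \<Rightarrow> ('v::finite \<Rightarrow> pref) \<Rightarrow> ('v \<Rightarrow> real) \<Rightarrow> ('v \<Rightarrow> 'v act set) \<Rightarrow> 'v profile \<Rightarrow> bool" where
  "equilibrium \<pi> p q M \<sigma> \<longleftrightarrow> bayes_nash \<pi> p q M \<sigma> \<and>
      (\<forall>i. \<not> weakly_dominated \<pi> p q M i (\<sigma> i))"

definition prob_correct :: "real \<Rightarrow> ('v::finite \<Rightarrow> real) \<Rightarrow> 'v profile \<Rightarrow> real" where
  "prob_correct \<pi> q \<sigma> = (\<Sum>w\<in>UNIV. \<Sum>s\<in>UNIV.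
      joint_prob \<pi> q w s * (if w then probA (\<lambda>j. \<sigma> j (s j)) else 1 - probA (\<lambda>j. \<sigma> j (s j))))"

definition best_equilibrium :: "real \<Rightarrow> ('v::finite \<Rightarrow> pref) \<Rightarrow> ('v \<Rightarrow> real) \<Rightarrow> ('v \<Rightarrow> 'v act set) \<Rightarrow> 'v profile \<Rightarrow> bool" where
  "best_equilibrium \<pi> p q M \<sigma> \<longleftrightarrow> equilibrium \<pi> p q M \<sigma> \<and>
      (\<forall>\<sigma>'. equilibrium \<pi> p q M \<sigma>' \<longrightarrow> prob_correct \<pi> q \<sigma>' \<le> prob_correct \<pi> q \<sigma>)"

end

theory Submission
  imports Defs "HOL-Library.FuncSet"
begin

fun tr :: "'v act \<Rightarrow> 'v act" where
  "tr (DelegStar b) = Vote b"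
| "tr (Vote b) = Vote b"
| "tr Abstain = Abstain"
| "tr (Deleg j) = Deleg j"

definition sv :: "bool \<Rightarrow> 'v act set \<Rightarrow> 'v act" where
  "sv b A = (if Vote b \<in> A then Vote b else DelegStar b)"

definition good_mech :: "('v \<Rightarrow> 'v act set) \<Rightarrow> bool" where
  "good_mech M \<longleftrightarrow> (\<forall>i b. sv b (M i) \<in> M i) \<and> (\<forall>i a. a \<in> M i \<longrightarrow> tr a \<in> LD_actions i)"

definition sinc :: "('v \<Rightarrow> 'v act set) \<Rightarrow> ('v \<Rightarrow> pref) \<Rightarrow> 'v \<Rightarrow> bool \<Rightarrow> 'v act" where
  "sinc M p i = (\<lambda>_. sv (p i = PrefA) (M i))"

definition repl :: "('v \<Rightarrow> 'v act set) \<Rightarrow> ('v \<Rightarrow> pref) \<Rightarrow> 'v set \<Rightarrow> 'v profile \<Rightarrow> 'v profile" where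
  "repl M p P \<sigma> = (\<lambda>i. if i \<in> P \<and> p i \<noteq> PrefI then sinc M p i else \<sigma> i)"

lemma sv_cases: "sv b A = Vote b \<or> sv b A = DelegStar b"
  by (simp add: sv_def)

lemma tr_sv: "tr (sv b A) = Vote b"
  by (simp add: sv_def)

lemma good_LD: "good_mech LD_actions"
  unfolding good_mech_def
proof (intro conjI allI impI)
  fix i b show "sv b (LD_actions i) \<in> LD_actions i" by (simp add: sv_def LD_actions_def)
next
  fix i and a :: "'a act" assume "a \<in> LD_actions i" then show "tr a \<in> LD_actions i"
    by (cases a) (auto simp: LD_actions_def)
qed

lemma good_DD: "good_mech DD_actions"
  unfolding good_mech_def
proof (intro conjI allI impI)
  fix i b show "sv b (DD_actions i) \<in> DD_actions i" by (simp add: sv_def DD_actions_def)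
next
  fix i and a :: "'a act" assume "a \<in> DD_actions i" then show "tr a \<in> LD_actions i"
    by (cases a) (auto simp: LD_actions_def DD_actions_def)
qed

lemma good_RD: "good_mech (RD_actions J)"
  unfolding good_mech_def
proof (intro conjI allI impI)
  fix i b show "sv b (RD_actions J i) \<in> RD_actions J i" by (simp add: sv_def RD_actions_def)
next
  fix i and a :: "'a act" assume "a \<in> RD_actions J i" then show "tr a \<in> LD_actions i"
    by (cases a) (auto simp: LD_actions_def RD_actions_def split: if_splits)
qed

lemma iter_upd:
  assumes "c = Vote b \<or> c = DelegStar b"
  shows "(next_voter (a(i:=c)) ^^ n) k = (next_voter a ^^ n) k \<or> (next_voter (a(i:=c)) ^^ n) k = i"
proof (induction n)
  case 0 show ?case by simp
next
  case (Suc n)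
  have fx: "next_voter (a(i:=c)) i = i" using assms by (auto simp: next_voter_def)
  have oth: "m \<noteq> i \<Longrightarrow> next_voter (a(i:=c)) m = next_voter a m" for m by (simp add: next_voter_def)
  show ?case
  proof (cases "(next_voter (a(i:=c)) ^^ n) k = i")
    case True
    have "(next_voter (a(i:=c)) ^^ Suc n) k = next_voter (a(i:=c)) ((next_voter (a(i:=c)) ^^ n) k)"
      by (simp only: funpow.simps comp_apply)
    also have "\<dots> = i" using True fx by (simp only:)
    finally show ?thesis by (rule disjI2)
  next
    case False
    with Suc have e: "(next_voter (a(i:=c)) ^^ n) k = (next_voter a ^^ n) k" by blast
    have "(next_voter (a(i:=c)) ^^ Suc n) k = next_voter (a(i:=c)) ((next_voter (a(i:=c)) ^^ n) k)"
      by (simp only: funpow.simps comp_apply)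
    also have "\<dots> = next_voter a ((next_voter (a(i:=c)) ^^ n) k)" using oth[OF False] by (simp only:)
    also have "\<dots> = (next_voter a ^^ Suc n) k" using e by (simp only: funpow.simps comp_apply)
    finally show ?thesis by (rule disjI1)
  qed
qed

lemma ballot_upd:
  fixes a :: "'v::finite \<Rightarrow> 'v act"
  assumes "c = Vote b \<or> c = DelegStar b"
  shows "ballot (a(i:=c)) k = ballot a k \<or> ballot (a(i:=c)) k = Some b"
proof -
  have h: "chain_end (a(i:=c)) k = chain_end a k \<or> chain_end (a(i:=c)) k = i"
    unfolding chain_end_def using iter_upd[OF assms] by blast
  show ?thesis
  proof (cases "chain_end (a(i:=c)) k = i")
    case True then show ?thesis using assms by (auto simp: ballot_def)
  next
    case False
    with h have "chain_end (a(i:=c)) k = chain_end a k" by blast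
    with False show ?thesis by (simp add: ballot_def)
  qed
qed

lemma probA_upd:
  fixes a :: "'v::finite \<Rightarrow> 'v act"
  assumes "c = Vote b \<or> c = DelegStar b"
  shows "if b then probA a \<le> probA (a(i:=c)) else probA (a(i:=c)) \<le> probA a"
proof -
  have s1: "{k. ballot a k = Some b} \<subseteq> {k. ballot (a(i:=c)) k = Some b}"
  proof
    fix k assume "k \<in> {k. ballot a k = Some b}"
    then show "k \<in> {k. ballot (a(i:=c)) k = Some b}" using ballot_upd[OF assms, of a i k] by auto
  qed
  have s2: "{k. ballot (a(i:=c)) k = Some (\<not>b)} \<subseteq> {k. ballot a k = Some (\<not>b)}"
  proof
    fix k assume "k \<in> {k. ballot (a(i:=c)) k = Some (\<not>b)}"
    then show "k \<in> {k. ballot a k = Some (\<not>b)}" using ballot_upd[OF assms, of a i k] by auto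
  qed
  have c1: "votes_for a b \<le> votes_for (a(i:=c)) b"
    unfolding votes_for_def by (rule card_mono[OF _ s1]) simp
  have c2: "votes_for (a(i:=c)) (\<not>b) \<le> votes_for a (\<not>b)"
    unfolding votes_for_def by (rule card_mono[OF _ s2]) simp
  show ?thesis
    using c1 c2 by (cases b) (auto simp: probA_def)
qed

lemma payoff_upd:
  fixes a :: "'v::finite \<Rightarrow> 'v act"
  assumes "pr \<noteq> PrefI" "c = Vote (pr = PrefA) \<or> c = DelegStar (pr = PrefA)"
  shows "payoff pr w (probA a) \<le> payoff pr w (probA (a(i:=c)))"
  using probA_upd[OF assms(2), of a i] assms(1)
  by (cases pr) (auto simp: payoff_def)

lemma nv_tr: "next_voter (\<lambda>j. tr (a j)) = next_voter a"
  by (rule ext) (simp add: next_voter_def split: act.split)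

lemma ballot_tr: "ballot (\<lambda>j. tr (a j)) k = ballot (a::'v::finite \<Rightarrow> 'v act) k"
  unfolding ballot_def chain_end_def nv_tr
  by (cases "a ((next_voter a ^^ card (UNIV::'v set)) k)") auto

lemma probA_tr: "probA (\<lambda>j. tr (a j)) = probA (a::'v::finite \<Rightarrow> 'v act)"
  unfolding probA_def votes_for_def ballot_tr ..

lemma pc_tr: "prob_correct \<pi> q (\<lambda>i x. tr (\<sigma> i x)) = prob_correct \<pi> q \<sigma>"
  unfolding prob_correct_def
proof (intro sum.cong refl)
  fix w s
  have "probA (\<lambda>j. tr (\<sigma> j (s j))) = probA (\<lambda>j. \<sigma> j (s j))" by (rule probA_tr)
  then show "joint_prob \<pi> q w s * (if w then probA (\<lambda>j. tr (\<sigma> j (s j))) else 1 - probA (\<lambda>j. tr (\<sigma> j (s j))))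
    = joint_prob \<pi> q w s * (if w then probA (\<lambda>j. \<sigma> j (s j)) else 1 - probA (\<lambda>j. \<sigma> j (s j)))"
    by (rule arg_cong[where f = "\<lambda>x. joint_prob \<pi> q w s * (if w then x else 1 - x)"])
qed

lemma joint_nonneg:
  assumes "0 \<le> \<pi>" "\<pi> \<le> 1" "\<forall>i. 0 \<le> q i \<and> q i \<le> 1"
  shows "0 \<le> joint_prob \<pi> q w s"
  using assms unfolding joint_prob_def by (auto intro!: mult_nonneg_nonneg prod_nonneg)

lemma exp_pc: "p i = PrefI \<Longrightarrow> exp_util \<pi> p q i \<sigma> = prob_correct \<pi> q \<sigma>"
  by (simp add: exp_util_def prob_correct_def payoff_def)

lemma act_sinc:
  "(\<lambda>j. (\<sigma>(i:=sinc M p i)) j (s j)) = (\<lambda>j. (\<sigma>(i:=\<tau>)) j (s j))(i := sv (p i = PrefA) (M i))"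
  by (rule ext) (simp add: sinc_def)

lemma eu_mono:
  assumes jn: "\<forall>w s. 0 \<le> joint_prob \<pi> q w s" and pi: "p i \<noteq> PrefI"
  shows "exp_util \<pi> p q i (\<sigma>(i:=\<tau>)) \<le> exp_util \<pi> p q i (\<sigma>(i:=sinc M p i))"
  unfolding exp_util_def act_sinc[of \<sigma> i M p _ \<tau>]
  by (intro sum_mono mult_left_mono payoff_upd pi sv_cases jn[rule_format])

lemma sum2_eq:
  fixes f g :: "'a \<Rightarrow> 'b \<Rightarrow> real"
  assumes fA: "finite A" and fB: "finite B" and le: "\<forall>x\<in>A. \<forall>y\<in>B. f x y \<le> g x y"
    and eq: "(\<Sum>x\<in>A. \<Sum>y\<in>B. f x y) = (\<Sum>x\<in>A. \<Sum>y\<in>B. g x y)"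
  shows "\<forall>x\<in>A. \<forall>y\<in>B. f x y = g x y"
proof (intro ballI)
  fix x y assume x: "x \<in> A" and y: "y \<in> B"
  define h where "h x = (\<Sum>y\<in>B. g x y - f x y)" for x
  have s0: "sum h A = 0" using eq unfolding h_def by (simp add: sum_subtractf)
  have hn: "\<forall>x\<in>A. 0 \<le> h x" unfolding h_def using le by (simp add: sum_nonneg)
  have "h x = 0" using sum_nonneg_eq_0_iff[OF fA, of h] s0 hn x by simp
  then have s1: "(\<Sum>y\<in>B. g x y - f x y) = 0" unfolding h_def .
  have hn2: "\<forall>y\<in>B. 0 \<le> g x y - f x y" using le x by simp
  have "g x y - f x y = 0" using sum_nonneg_eq_0_iff[OF fB, of "\<lambda>y. g x y - f x y"] s1 hn2 y by simp
  then show "f x y = g x y" by simp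
qed


definition actF :: "'v act set" where
  "actF = {Vote True, Vote False, Abstain} \<union> range Deleg"

lemma finite_actF: "finite (actF :: 'v::finite act set)"
  unfolding actF_def by simp

lemma LD_sub: "LD_actions i \<subseteq> actF"
  unfolding LD_actions_def actF_def by auto

lemma finite_strats: "finite {\<tau> :: bool \<Rightarrow> 'v::finite act. valid_strategy LD_actions i \<tau>}"
proof (rule finite_subset)
  show "{\<tau> :: bool \<Rightarrow> 'v::finite act. valid_strategy LD_actions i \<tau>} \<subseteq> PiE UNIV (\<lambda>_. actF)"
    by (auto simp: valid_strategy_def PiE_UNIV_domain intro: subsetD[OF LD_sub])
  show "finite (PiE (UNIV::bool set) (\<lambda>_. (actF :: 'v act set)))"
    by (intro finite_PiE finite_actF) simp
qed

lemma finite_profiles: "finite {\<sigma> :: 'v::finite profile. valid_profile LD_actions \<sigma>}"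
proof (rule finite_subset)
  show "{\<sigma> :: 'v::finite profile. valid_profile LD_actions \<sigma>} \<subseteq> PiE UNIV (\<lambda>_. PiE UNIV (\<lambda>_. actF))"
    by (auto simp: valid_profile_def PiE_UNIV_domain intro: subsetD[OF LD_sub])
  show "finite (PiE (UNIV::'v set) (\<lambda>_. PiE (UNIV::bool set) (\<lambda>_. (actF :: 'v act set))))"
    by (intro finite_PiE finite_actF) simp_all
qed

lemma repl_valid: "good_mech M \<Longrightarrow> valid_profile M \<sigma> \<Longrightarrow> valid_profile M (repl M p P \<sigma>)"
  by (auto simp: good_mech_def valid_profile_def repl_def sinc_def)

lemma repl_insert: "i \<notin> P \<Longrightarrow>
  repl M p (insert i P) \<sigma> = (repl M p P \<sigma>)(i := (if p i \<noteq> PrefI then sinc M p i else \<sigma> i))"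
  by (rule ext) (auto simp: repl_def)

lemma partisan_eq:
  fixes \<sigma> :: "'v::finite profile"
  assumes jn: "\<forall>w s. 0 \<le> joint_prob \<pi> q w s" and pi: "p i \<noteq> PrefI" and gm: "good_mech M"
    and nd: "\<not> weakly_dominated \<pi> p q M i (\<sigma> i)" and vs: "valid_profile M \<sigma>"
  shows "prob_correct \<pi> q (\<sigma>(i := sinc M p i)) = prob_correct \<pi> q \<sigma>"
proof -
  have svs: "valid_strategy M i (sinc M p i)" using gm by (simp add: valid_strategy_def sinc_def good_mech_def)
  have le: "\<forall>\<sigma>'. valid_profile M \<sigma>' \<longrightarrow> exp_util \<pi> p q i (\<sigma>'(i:=\<sigma> i)) \<le> exp_util \<pi> p q i (\<sigma>'(i:=sinc M p i))"
    using eu_mono[of \<pi> q p i, OF jn pi] by blast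
  have "\<not> (exp_util \<pi> p q i (\<sigma>(i:=\<sigma> i)) < exp_util \<pi> p q i (\<sigma>(i:=sinc M p i)))"
    using nd svs le vs unfolding weakly_dominated_def by blast
  then have eq: "exp_util \<pi> p q i \<sigma> = exp_util \<pi> p q i (\<sigma>(i:=sinc M p i))"
    using le vs by fastforce
  define A where "A s = (\<lambda>j. \<sigma> j (s j))" for s :: "'v \<Rightarrow> bool"
  define A' where "A' s = (\<lambda>j. (\<sigma>(i:=sinc M p i)) j (s j))" for s :: "'v \<Rightarrow> bool"
  have A'A: "A' s = (A s)(i := sv (p i = PrefA) (M i))" for s
    unfolding A_def A'_def using act_sinc[of \<sigma> i M p s "\<sigma> i"] by simp
  have pw: "\<forall>w\<in>UNIV. \<forall>s\<in>UNIV. joint_prob \<pi> q w s * payoff (p i) w (probA (A s))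
      \<le> joint_prob \<pi> q w s * payoff (p i) w (probA (A' s))"
    unfolding A'A by (intro ballI mult_left_mono payoff_upd pi sv_cases jn[rule_format])
  have "\<forall>w\<in>UNIV. \<forall>s\<in>UNIV. joint_prob \<pi> q w s * payoff (p i) w (probA (A s))
      = joint_prob \<pi> q w s * payoff (p i) w (probA (A' s))"
    by (rule sum2_eq[OF finite_UNIV finite_UNIV pw]) (use eq in \<open>simp add: exp_util_def A_def A'_def\<close>)
  then have pe: "joint_prob \<pi> q w s = 0 \<or> probA (A s) = probA (A' s)" for w s
    using pi by (cases "p i") (auto simp: payoff_def)
  show ?thesis
    unfolding prob_correct_def
  proof (intro sum.cong refl)
    fix w s
    show "joint_prob \<pi> q w s * (if w then probA (\<lambda>j. (\<sigma>(i := sinc M p i)) j (s j)) else 1 - probA (\<lambda>j. (\<sigma>(i := sinc M p i)) j (s j)))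
       = joint_prob \<pi> q w s * (if w then probA (\<lambda>j. \<sigma> j (s j)) else 1 - probA (\<lambda>j. \<sigma> j (s j)))"
      using pe[of w s] unfolding A_def A'_def by auto
  qed
qed

lemma repl_pc:
  fixes \<sigma> :: "'v::finite profile"
  assumes fin: "finite P" and jn: "\<forall>w s. 0 \<le> joint_prob \<pi> q w s" and gm: "good_mech M"
    and eqm: "equilibrium \<pi> p q M \<sigma>"
  shows "prob_correct \<pi> q (repl M p P \<sigma>) = prob_correct \<pi> q \<sigma>"
  using fin
proof (induction P rule: finite_induct)
  case empty
  have "repl M p {} \<sigma> = \<sigma>" by (rule ext) (simp add: repl_def)
  then show ?case by simp
next
  case (insert i P)
  have vs: "valid_profile M \<sigma>" using eqm by (simp add: equilibrium_def bayes_nash_def)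
  have ri: "repl M p P \<sigma> i = \<sigma> i" using insert(2) by (simp add: repl_def)
  show ?case
  proof (cases "p i = PrefI")
    case True
    have "repl M p (insert i P) \<sigma> = (repl M p P \<sigma>)(i := \<sigma> i)"
      using repl_insert[OF insert(2)] True by simp
    also have "\<dots> = repl M p P \<sigma>" using ri by (rule fun_upd_idem)
    finally have e: "repl M p (insert i P) \<sigma> = repl M p P \<sigma>" .
    show ?thesis unfolding e by (rule insert(3))
  next
    case False
    have nd: "\<not> weakly_dominated \<pi> p q M i (repl M p P \<sigma> i)"
      using eqm ri by (simp add: equilibrium_def)
    have e: "repl M p (insert i P) \<sigma> = (repl M p P \<sigma>)(i := sinc M p i)"
      using repl_insert[OF insert(2)] False by simp
    have "prob_correct \<pi> q ((repl M p P \<sigma>)(i := sinc M p i)) = prob_correct \<pi> q (repl M p P \<sigma>)"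
      by (rule partisan_eq[OF jn False gm nd repl_valid[OF gm vs]])
    then show ?thesis unfolding e using insert(3) by (rule trans)
  qed
qed


lemma sum_split:
  fixes g :: "('v::finite \<Rightarrow> bool) \<Rightarrow> real"
  shows "(\<Sum>s\<in>UNIV. g s) = (\<Sum>s\<in>{s. s i = x}. g s) + (\<Sum>s\<in>{s. s i \<noteq> x}. g s)"
proof -
  have u: "(UNIV::('v \<Rightarrow> bool) set) = {s. s i = x} \<union> {s. s i \<noteq> x}" by auto
  have "(\<Sum>s\<in>UNIV. g s) = (\<Sum>s\<in>{s. s i = x} \<union> {s. s i \<noteq> x}. g s)" by (subst u) (rule refl)
  also have "\<dots> = (\<Sum>s\<in>{s. s i = x}. g s) + (\<Sum>s\<in>{s. s i \<noteq> x}. g s)"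
    by (rule sum.union_disjoint) auto
  finally show ?thesis .
qed

theorem proposition1:
  fixes \<pi> :: real and p :: "'v::finite \<Rightarrow> pref" and q :: "'v \<Rightarrow> real"
  assumes "0 < \<pi>" and "\<pi> < 1"
    and "\<forall>i. 1/2 \<le> q i \<and> q i \<le> 1"
  shows "\<exists>\<sigma>. best_equilibrium \<pi> p q LD_actions \<sigma> \<and>
           (\<forall>\<sigma>'. best_equilibrium \<pi> p q DD_actions \<sigma>' \<longrightarrow> prob_correct \<pi> q \<sigma>' \<le> prob_correct \<pi> q \<sigma>) \<and>
           (\<forall>J \<sigma>'. best_equilibrium \<pi> p q (RD_actions J) \<sigma>' \<longrightarrow> prob_correct \<pi> q \<sigma>' \<le> prob_correct \<pi> q \<sigma>)"
proof -
  have qb: "\<forall>i. 0 \<le> q i \<and> q i \<le> 1"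
  proof
    fix i
    have "1/2 \<le> q i \<and> q i \<le> 1" using assms(3) by blast
    then show "0 \<le> q i \<and> q i \<le> 1" by linarith
  qed
  have jn: "\<forall>w s. 0 \<le> joint_prob \<pi> q w s"
    using joint_nonneg[of \<pi> q] assms(1,2) qb by auto
  define S where "S = {\<sigma> :: 'v profile. valid_profile LD_actions \<sigma> \<and> (\<forall>i. p i \<noteq> PrefI \<longrightarrow> \<sigma> i = (\<lambda>_. Vote (p i = PrefA)))}"
  have finS: "finite S" by (rule finite_subset[OF _ finite_profiles]) (auto simp: S_def)
  define \<sigma>0 :: "'v profile" where "\<sigma>0 = (\<lambda>i. if p i \<noteq> PrefI then (\<lambda>_. Vote (p i = PrefA)) else (\<lambda>_. Abstain))"
  have "\<sigma>0 \<in> S" by (auto simp: S_def \<sigma>0_def valid_profile_def LD_actions_def)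
  then have neS: "S \<noteq> {}" by blast
  define m where "m = Max (prob_correct \<pi> q ` S)"
  have m_ge: "prob_correct \<pi> q \<sigma> \<le> m" if "\<sigma> \<in> S" for \<sigma> unfolding m_def using finS that by (intro Max_ge) auto
  have "m \<in> prob_correct \<pi> q ` S" unfolding m_def using finS neS by (intro Max_in) auto
  then obtain \<sigma>m where \<sigma>m: "\<sigma>m \<in> S \<and> prob_correct \<pi> q \<sigma>m = m" by auto
  define dom where "dom i \<tau> \<tau>' \<longleftrightarrow> valid_strategy LD_actions i \<tau>' \<and>
      (\<forall>\<sigma>. valid_profile LD_actions \<sigma> \<longrightarrow> exp_util \<pi> p q i (\<sigma>(i := \<tau>)) \<le> exp_util \<pi> p q i (\<sigma>(i := \<tau>'))) \<and>
      (\<exists>\<sigma>. valid_profile LD_actions \<sigma> \<and> exp_util \<pi> p q i (\<sigma>(i := \<tau>)) < exp_util \<pi> p q i (\<sigma>(i := \<tau>')))" for i \<tau> \<tau>'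
  have wd: "weakly_dominated \<pi> p q LD_actions i \<tau> \<longleftrightarrow> (\<exists>\<tau>'. dom i \<tau> \<tau>')" for i \<tau>
    unfolding weakly_dominated_def dom_def by (rule refl)
  define \<mu> where "\<mu> \<sigma> = (\<Sum>i\<in>UNIV. card {\<tau>'. dom i (\<sigma> i) \<tau>'})" for \<sigma> :: "'v profile"
  obtain \<sigma>s where \<sigma>s: "\<sigma>s \<in> S \<and> prob_correct \<pi> q \<sigma>s = m"
    and min\<mu>: "\<And>\<sigma>. \<sigma> \<in> S \<and> prob_correct \<pi> q \<sigma> = m \<Longrightarrow> \<mu> \<sigma>s \<le> \<mu> \<sigma>"
    using ex_has_least_nat[of "\<lambda>\<sigma>. \<sigma> \<in> S \<and> prob_correct \<pi> q \<sigma> = m" \<sigma>m \<mu>] \<sigma>m by blast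
  have \<sigma>sS: "\<sigma>s \<in> S" and pcs: "prob_correct \<pi> q \<sigma>s = m" using \<sigma>s by auto
  have vs: "valid_profile LD_actions \<sigma>s" using \<sigma>sS by (simp add: S_def)
  have part: "\<sigma>s i = (\<lambda>_. Vote (p i = PrefA))" if "p i \<noteq> PrefI" for i using \<sigma>sS that by (simp add: S_def)

  have bound: "prob_correct \<pi> q \<sigma>' \<le> m" if gm: "good_mech M" and eqm: "equilibrium \<pi> p q M \<sigma>'" for M \<sigma>'
  proof -
    define \<rho> where "\<rho> = repl M p UNIV \<sigma>'"
    have v\<sigma>': "valid_profile M \<sigma>'" using eqm by (simp add: equilibrium_def bayes_nash_def)
    have v\<rho>: "valid_profile M \<rho>" unfolding \<rho>_def by (rule repl_valid[OF gm v\<sigma>'])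
    have "(\<lambda>i x. tr (\<rho> i x)) \<in> S"
      unfolding S_def
    proof (intro CollectI conjI allI impI)
      show "valid_profile LD_actions (\<lambda>i x. tr (\<rho> i x))" using v\<rho> gm by (auto simp: valid_profile_def good_mech_def)
      fix i assume "p i \<noteq> PrefI"
      then show "(\<lambda>x. tr (\<rho> i x)) = (\<lambda>_. Vote (p i = PrefA))" by (simp add: \<rho>_def repl_def sinc_def tr_sv)
    qed
    then have "prob_correct \<pi> q (\<lambda>i x. tr (\<rho> i x)) \<le> m" by (rule m_ge)
    moreover have "prob_correct \<pi> q \<rho> = prob_correct \<pi> q \<sigma>'" unfolding \<rho>_def by (rule repl_pc[OF finite_UNIV jn gm eqm])
    moreover have "prob_correct \<pi> q (\<lambda>i x. tr (\<rho> i x)) = prob_correct \<pi> q \<rho>" by (rule pc_tr)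
    ultimately show ?thesis by linarith
  qed

  have eqs: "equilibrium \<pi> p q LD_actions \<sigma>s"
    unfolding equilibrium_def bayes_nash_def
  proof (intro conjI allI impI)
    show "valid_profile LD_actions \<sigma>s" by (rule vs)
  next
    fix i :: 'v and x :: bool and c :: "'v act" assume c: "c \<in> LD_actions i"
    define \<delta> where "\<delta> = \<sigma>s(i := (\<sigma>s i)(x := c))"
    define N where "N \<sigma> = (\<Sum>w\<in>UNIV. \<Sum>s\<in>{s. s i = x}. joint_prob \<pi> q w s * payoff (p i) w (probA (\<lambda>j. \<sigma> j (s j))))" for \<sigma> :: "'v profile"
    define D where "D = (\<Sum>w\<in>UNIV. \<Sum>s\<in>{s. s i = x}. joint_prob \<pi> q w s)"
    have iu: "interim_util \<pi> p q i x \<sigma> = N \<sigma> / D" for \<sigma> unfolding interim_util_def N_def D_def by (rule refl)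
    have D0: "0 \<le> D" unfolding D_def using jn by (intro sum_nonneg) auto
    show "interim_util \<pi> p q i x \<delta> \<le> interim_util \<pi> p q i x \<sigma>s"
    proof (cases "p i = PrefI")
      case False
      have "N \<delta> \<le> N \<sigma>s" unfolding N_def
      proof (intro sum_mono mult_left_mono)
        fix w s
        have "(\<lambda>j. \<sigma>s j (s j)) = (\<lambda>j. \<delta> j (s j))(i := Vote (p i = PrefA))"
          using part[OF False] by (auto simp: \<delta>_def)
        then show "payoff (p i) w (probA (\<lambda>j. \<delta> j (s j))) \<le> payoff (p i) w (probA (\<lambda>j. \<sigma>s j (s j)))"
          using payoff_upd[OF False, where a = "\<lambda>j. \<delta> j (s j)" and i = i and w = w and c = "Vote (p i = PrefA)"] by simp
        show "0 \<le> joint_prob \<pi> q w s" using jn by simp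
      qed
      then show ?thesis unfolding iu by (rule divide_right_mono[OF _ D0])
    next
      case True
      show ?thesis
      proof (rule ccontr)
        assume "\<not> ?thesis"
        then have lt: "N \<sigma>s / D < N \<delta> / D" unfolding iu by simp
        have Nlt: "N \<sigma>s < N \<delta>"
        proof (cases "D = 0")
          case True with lt show ?thesis by simp
        next
          case False with D0 have "0 < D" by simp
          with lt show ?thesis by (simp add: divide_less_cancel)
        qed
        define N' where "N' \<sigma> = (\<Sum>w\<in>UNIV. \<Sum>s\<in>{s. s i \<noteq> x}. joint_prob \<pi> q w s * payoff (p i) w (probA (\<lambda>j. \<sigma> j (s j))))" for \<sigma> :: "'v profile"
        have split: "exp_util \<pi> p q i \<sigma> = N \<sigma> + N' \<sigma>" for \<sigma>
          unfolding exp_util_def N_def N'_def sum.distrib[symmetric]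
          by (intro sum.cong refl) (rule sum_split)
        have same: "(\<lambda>j. \<delta> j (s j)) = (\<lambda>j. \<sigma>s j (s j))" if "s i \<noteq> x" for s
          using that by (auto simp: \<delta>_def)
        have "N' \<delta> = N' \<sigma>s" unfolding N'_def
          by (intro sum.cong refl) (simp add: same)
        then have "exp_util \<pi> p q i \<sigma>s < exp_util \<pi> p q i \<delta>" using split Nlt by simp
        then have "prob_correct \<pi> q \<sigma>s < prob_correct \<pi> q \<delta>" using exp_pc[of p i, OF True] by simp
        moreover have "\<delta> \<in> S"
          unfolding S_def
        proof (intro CollectI conjI allI impI)
          show "valid_profile LD_actions \<delta>" using vs c by (auto simp: valid_profile_def \<delta>_def)
          fix j assume "p j \<noteq> PrefI"
          then have "j \<noteq> i" using True by auto
          then show "\<delta> j = (\<lambda>_. Vote (p j = PrefA))" using part[OF \<open>p j \<noteq> PrefI\<close>] by (simp add: \<delta>_def)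
        qed
        ultimately show False using m_ge pcs by fastforce
      qed
    qed
  next
    fix i :: 'v show "\<not> weakly_dominated \<pi> p q LD_actions i (\<sigma>s i)"
    proof (cases "p i = PrefI")
      case False
      have sl: "sinc LD_actions p i = \<sigma>s i" using part[OF False] by (simp add: sinc_def sv_def LD_actions_def)
      show ?thesis
      proof
        assume "weakly_dominated \<pi> p q LD_actions i (\<sigma>s i)"
        then obtain \<tau>' \<sigma> where "exp_util \<pi> p q i (\<sigma>(i := \<sigma>s i)) < exp_util \<pi> p q i (\<sigma>(i := \<tau>'))"
          unfolding weakly_dominated_def by blast
        moreover have "exp_util \<pi> p q i (\<sigma>(i := \<tau>')) \<le> exp_util \<pi> p q i (\<sigma>(i := sinc LD_actions p i))"
          by (rule eu_mono[of \<pi> q p i, OF jn False])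
        ultimately show False using sl by simp
      qed
    next
      case True
      show ?thesis
      proof
        assume "weakly_dominated \<pi> p q LD_actions i (\<sigma>s i)"
        then obtain \<tau>' where d: "dom i (\<sigma>s i) \<tau>'" using wd by blast
        define \<sigma>2 where "\<sigma>2 = \<sigma>s(i := \<tau>')"
        have "\<sigma>2 \<in> S"
          unfolding S_def
        proof (intro CollectI conjI allI impI)
          show "valid_profile LD_actions \<sigma>2" using vs d by (auto simp: valid_profile_def \<sigma>2_def dom_def valid_strategy_def)
          fix j assume "p j \<noteq> PrefI"
          then have "j \<noteq> i" using True by auto
          then show "\<sigma>2 j = (\<lambda>_. Vote (p j = PrefA))" using part[OF \<open>p j \<noteq> PrefI\<close>] by (simp add: \<sigma>2_def)
        qed
        have "exp_util \<pi> p q i (\<sigma>s(i := \<sigma>s i)) \<le> exp_util \<pi> p q i (\<sigma>s(i := \<tau>'))"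
          using d vs unfolding dom_def by blast
        then have "m \<le> prob_correct \<pi> q \<sigma>2" using exp_pc[of p i, OF True] pcs by (simp add: \<sigma>2_def)
        with m_ge[OF \<open>\<sigma>2 \<in> S\<close>] have "prob_correct \<pi> q \<sigma>2 = m" by simp
        with \<open>\<sigma>2 \<in> S\<close> have "\<mu> \<sigma>s \<le> \<mu> \<sigma>2" using min\<mu> by blast
        moreover have "\<mu> \<sigma>2 < \<mu> \<sigma>s"
        proof -
          have fin: "finite {\<tau>''. dom i (\<sigma>s i) \<tau>''}"
            by (rule finite_subset[OF _ finite_strats[of i]]) (auto simp: dom_def)
          have sub: "{\<tau>''. dom i \<tau>' \<tau>''} \<subseteq> {\<tau>''. dom i (\<sigma>s i) \<tau>''}"
          proof
            fix \<tau>'' assume "\<tau>'' \<in> {\<tau>''. dom i \<tau>' \<tau>''}"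
            then have d2: "dom i \<tau>' \<tau>''" by simp
            have v2: "valid_strategy LD_actions i \<tau>''" using d2 by (simp add: dom_def)
            have a2: "exp_util \<pi> p q i (\<sigma>(i := \<sigma>s i)) \<le> exp_util \<pi> p q i (\<sigma>(i := \<tau>''))"
              if "valid_profile LD_actions \<sigma>" for \<sigma>
            proof -
              have "exp_util \<pi> p q i (\<sigma>(i := \<sigma>s i)) \<le> exp_util \<pi> p q i (\<sigma>(i := \<tau>'))"
                using d that unfolding dom_def by blast
              also have "\<dots> \<le> exp_util \<pi> p q i (\<sigma>(i := \<tau>''))"
                using d2 that unfolding dom_def by blast
              finally show ?thesis .
            qed
            obtain \<sigma>0 where s0: "valid_profile LD_actions \<sigma>0"
              "exp_util \<pi> p q i (\<sigma>0(i := \<sigma>s i)) < exp_util \<pi> p q i (\<sigma>0(i := \<tau>'))"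
              using d unfolding dom_def by blast
            have "exp_util \<pi> p q i (\<sigma>0(i := \<tau>')) \<le> exp_util \<pi> p q i (\<sigma>0(i := \<tau>''))"
              using d2 s0(1) unfolding dom_def by blast
            with s0 have a3: "exp_util \<pi> p q i (\<sigma>0(i := \<sigma>s i)) < exp_util \<pi> p q i (\<sigma>0(i := \<tau>''))" by simp
            have "dom i (\<sigma>s i) \<tau>''" unfolding dom_def using v2 a2 a3 s0(1) by blast
            then show "\<tau>'' \<in> {\<tau>''. dom i (\<sigma>s i) \<tau>''}" by simp
          qed
          have in1: "\<tau>' \<in> {\<tau>''. dom i (\<sigma>s i) \<tau>''}" using d by simp
          have in2: "\<tau>' \<notin> {\<tau>''. dom i \<tau>' \<tau>''}" by (simp add: dom_def)
          have psub: "{\<tau>''. dom i \<tau>' \<tau>''} \<subset> {\<tau>''. dom i (\<sigma>s i) \<tau>''}" using sub in1 in2 by blast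
          have ci: "card {\<tau>''. dom i (\<sigma>2 i) \<tau>''} < card {\<tau>''. dom i (\<sigma>s i) \<tau>''}"
            using psubset_card_mono[OF fin psub] by (simp add: \<sigma>2_def)
          have cj: "\<forall>j\<in>UNIV. card {\<tau>''. dom j (\<sigma>2 j) \<tau>''} \<le> card {\<tau>''. dom j (\<sigma>s j) \<tau>''}"
          proof
            fix j :: 'v
            show "card {\<tau>''. dom j (\<sigma>2 j) \<tau>''} \<le> card {\<tau>''. dom j (\<sigma>s j) \<tau>''}"
            proof (cases "j = i")
              case True then show ?thesis using ci by simp
            next
              case False then show ?thesis by (simp add: \<sigma>2_def)
            qed
          qed
          show ?thesis unfolding \<mu>_def
            by (rule sum_strict_mono_ex1[OF finite_UNIV cj]) (use ci in blast)
        qed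
        ultimately show False by simp
      qed
    qed
  qed

  show ?thesis
  proof (intro exI conjI allI impI)
    show "best_equilibrium \<pi> p q LD_actions \<sigma>s"
      unfolding best_equilibrium_def using eqs bound[OF good_LD] pcs by simp
  next
    fix \<sigma>' assume "best_equilibrium \<pi> p q DD_actions \<sigma>'"
    then show "prob_correct \<pi> q \<sigma>' \<le> prob_correct \<pi> q \<sigma>s"
      using bound[OF good_DD] pcs by (simp add: best_equilibrium_def)
  next
    fix J \<sigma>' assume "best_equilibrium \<pi> p q (RD_actions J) \<sigma>'"
    then have "equilibrium \<pi> p q (RD_actions J) \<sigma>'" by (simp add: best_equilibrium_def)
    then show "prob_correct \<pi> q \<sigma>' \<le> prob_correct \<pi> q \<sigma>s"
      using bound[OF good_RD] pcs by simp
  qed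
qed

end
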